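(* Let $D$ be an integral domain with quotient field $K$. The map $\mathcal F\mapsto\boldsymbol{\mathcal S}(\mathcal F):=D[X]\setminus\bigcup\{Q[X]\mid Q\in\mathrm{Spec}(D),\ Q\notin\mathcal F\}$ is a bijection between the set of localizing systems of finite type on $D$ and the set of extended saturated multiplicative subsets of $D[X]$. Moreover, for every localizing system of finite type $\mathcal F$ and every $E\in\overline{\boldsymbol F}(D)$, $E_{\mathcal F}=E\cdot D[X]_{\boldsymbol{\mathcal S}(\mathcal F)}\cap K$.
   Context: $\overline{\boldsymbol F}(D)$ is the set of nonzero $D$-submodules of $K$. A localizing system of ideals of $D$ is a nonempty set $\mathcal F$ of ideals of $D$ with $(0)\notin\mathcal F$ such that: if $I\in\mathcal F$ and $I\subseteq J$ ($J$ an ideal) then $J\in\mathcal F$; and if $I\in\mathcal F$ and $J$ is an ideal with $(J:_D iD)\in\mathcal F$ for every $i\in I$, then $J\in\mathcal F$. It is of finite type if every $I\in\mathcal F$ contains a finitely generated $J\in\mathcal F$. For $E\in\overline{\boldsymbol F}(D)$, $E_{\mathcal F}=\bigcup\{(E:I)\mid I\in\mathcal F\}=\{z\in K\mid (E:_D zD)\in\mathcal F\}$. For a multiplicative set $\mathcal S\subseteq D[X]$, its extended saturation is $\mathcal S^\sharp=D[X]\setminus\bigcup\{P[X]\mid P\in\mathrm{Spec}(D),\ P[X]\cap\mathcal S=\emptyset\}$, and $\mathcal S$ is extended saturated if $\mathcal S=\mathcal S^\sharp$. *)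

theory Defs
  imports "HOL-Computational_Algebra.Polynomial" "HOL-Computational_Algebra.Fraction_Field"
begin

text \<open>Convention: the quotient field K is a type 'k of class field; the integral
domain D is a subring of K (given as a set) whose quotient field is K.\<close>

definition subring_of :: "'k::field set \<Rightarrow> bool" where
  "subring_of D \<longleftrightarrow> 0 \<in> D \<and> 1 \<in> D \<and> (\<forall>a\<in>D. \<forall>b\<in>D. a + b \<in> D \<and> a - b \<in> D \<and> a * b \<in> D)"

definition quotient_field_of :: "'k::field set \<Rightarrow> bool" where
  "quotient_field_of D \<longleftrightarrow> (\<forall>z. \<exists>a\<in>D. \<exists>b\<in>D. b \<noteq> 0 \<and> z = a / b)"

definition submodule_of :: "'k::field set \<Rightarrow> 'k set \<Rightarrow> bool" where
  "submodule_of D E \<longleftrightarrow> 0 \<in> E \<and> (\<forall>x\<in>E. \<forall>y\<in>E. x + y \<in> E) \<and> (\<forall>d\<in>D. \<forall>x\<in>E. d * x \<in> E)"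

definition Fbar :: "'k::field set \<Rightarrow> 'k set \<Rightarrow> bool" where
  "Fbar D E \<longleftrightarrow> submodule_of D E \<and> E \<noteq> {0}"

definition ideal_of :: "'k::field set \<Rightarrow> 'k set \<Rightarrow> bool" where
  "ideal_of D I \<longleftrightarrow> I \<subseteq> D \<and> submodule_of D I"

definition prime_ideal_of :: "'k::field set \<Rightarrow> 'k set \<Rightarrow> bool" where
  "prime_ideal_of D P \<longleftrightarrow> ideal_of D P \<and> P \<noteq> D \<and>
     (\<forall>a\<in>D. \<forall>b\<in>D. a * b \<in> P \<longrightarrow> a \<in> P \<or> b \<in> P)"

definition Spec :: "'k::field set \<Rightarrow> 'k set set" where
  "Spec D = {P. prime_ideal_of D P}"

definition colon_D :: "'k::field set \<Rightarrow> 'k set \<Rightarrow> 'k \<Rightarrow> 'k set" where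
  "colon_D D J i = {d \<in> D. d * i \<in> J}"

definition colon :: "'k::field set \<Rightarrow> 'k set \<Rightarrow> 'k set" where
  "colon E I = {z. \<forall>i\<in>I. z * i \<in> E}"

definition localizing_system :: "'k::field set \<Rightarrow> 'k set set \<Rightarrow> bool" where
  "localizing_system D F \<longleftrightarrow>
     F \<noteq> {} \<and> (\<forall>I\<in>F. ideal_of D I) \<and> {0} \<notin> F \<and>
     (\<forall>I\<in>F. \<forall>J. ideal_of D J \<and> I \<subseteq> J \<longrightarrow> J \<in> F) \<and>
     (\<forall>I\<in>F. \<forall>J. ideal_of D J \<and> (\<forall>i\<in>I. colon_D D J i \<in> F) \<longrightarrow> J \<in> F)"

definition ideal_gen :: "'k::field set \<Rightarrow> 'k set \<Rightarrow> 'k set" where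
  "ideal_gen D G = {\<Sum>g\<in>G. a g * g | a. \<forall>g\<in>G. a g \<in> D}"

definition finitely_generated_ideal :: "'k::field set \<Rightarrow> 'k set \<Rightarrow> bool" where
  "finitely_generated_ideal D J \<longleftrightarrow> (\<exists>G. finite G \<and> G \<subseteq> D \<and> J = ideal_gen D G)"

definition loc_sys_finite_type :: "'k::field set \<Rightarrow> 'k set set \<Rightarrow> bool" where
  "loc_sys_finite_type D F \<longleftrightarrow> localizing_system D F \<and>
     (\<forall>I\<in>F. \<exists>J\<in>F. J \<subseteq> I \<and> finitely_generated_ideal D J)"

definition E_loc :: "'k::field set set \<Rightarrow> 'k set \<Rightarrow> 'k set" where
  "E_loc F E = \<Union>{colon E I | I. I \<in> F}"

text \<open>A[X] for a subset A of K: polynomials over K with all coefficients in A.\<close>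
definition polys_over :: "'k::field set \<Rightarrow> 'k poly set" where
  "polys_over A = {p. \<forall>n. coeff p n \<in> A}"

definition mult_subset :: "'k::field set \<Rightarrow> 'k poly set \<Rightarrow> bool" where
  "mult_subset D S \<longleftrightarrow> S \<subseteq> polys_over D \<and> 1 \<in> S \<and> 0 \<notin> S \<and>
     (\<forall>s\<in>S. \<forall>t\<in>S. s * t \<in> S)"

definition ext_saturation :: "'k::field set \<Rightarrow> 'k poly set \<Rightarrow> 'k poly set" where
  "ext_saturation D S = polys_over D -
     \<Union>{polys_over P | P. P \<in> Spec D \<and> polys_over P \<inter> S = {}}"

definition ext_saturated :: "'k::field set \<Rightarrow> 'k poly set \<Rightarrow> bool" where
  "ext_saturated D S \<longleftrightarrow> S = ext_saturation D S"

definition S_of :: "'k::field set \<Rightarrow> 'k set set \<Rightarrow> 'k poly set" where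
  "S_of D F = polys_over D - \<Union>{polys_over Q | Q. Q \<in> Spec D \<and> Q \<notin> F}"

text \<open>D[X]_S as a subring of K(X) = fraction field of K[X].\<close>
definition loc_ring :: "'k::field set \<Rightarrow> 'k poly set \<Rightarrow> 'k poly fract set" where
  "loc_ring D S = {Fract f s | f s. f \<in> polys_over D \<and> s \<in> S}"

text \<open>E \<cdot> D[X]_S: the D[X]_S-submodule of K(X) generated by E (finite sums).\<close>
definition ext_module :: "'k::field set \<Rightarrow> 'k set \<Rightarrow> 'k poly set \<Rightarrow> 'k poly fract set" where
  "ext_module D E S = {\<Sum>i<n. Fract [:e i:] 1 * r i | (n::nat) e r.
      \<forall>i<n. e i \<in> E \<and> r i \<in> loc_ring D S}"

text \<open>Intersection with K, K embedded in K(X) as constants.\<close>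
definition inter_K :: "'k::field poly fract set \<Rightarrow> 'k set" where
  "inter_K A = {z. Fract [:z:] 1 \<in> A}"

end

theory Submission imports Defs begin

lemma sub_sum:
  assumes "submodule_of D A" "finite S" "\<And>x. x \<in> S \<Longrightarrow> f x \<in> A"
  shows "sum f S \<in> A"
  using assms(2,3)
proof (induction S rule: finite_induct)
  case empty then show ?case using assms(1) by (simp add: submodule_of_def)
next
  case (insert x F) then show ?case using assms(1) by (simp add: submodule_of_def)
qed

lemma subring_submodule: "subring_of D \<Longrightarrow> submodule_of D D"
  by (simp add: subring_of_def submodule_of_def)

lemma poly_mult_closed:
  assumes "subring_of D" "submodule_of D A" "p \<in> polys_over A" "q \<in> polys_over D"
  shows "p * q \<in> polys_over A" "q * p \<in> polys_over A"
proof -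
  have "coeff (p*q) n \<in> A" for n
    unfolding coeff_mult
  proof (rule sub_sum[OF assms(2)])
    fix i
    have "coeff q (n-i) * coeff p i \<in> A" using assms(2-4) by (simp add: submodule_of_def polys_over_def)
    then show "coeff p i * coeff q (n-i) \<in> A" by (simp add: mult.commute)
  qed simp
  then show "p * q \<in> polys_over A" "q * p \<in> polys_over A" by (auto simp: polys_over_def mult.commute)
qed

lemma poly_add_closed:
  assumes "submodule_of D A" "p \<in> polys_over A" "q \<in> polys_over A"
  shows "p + q \<in> polys_over A"
  using assms by (simp add: polys_over_def submodule_of_def)

lemma ideal_genI: "x = (\<Sum>g\<in>G. a g * g) \<Longrightarrow> \<forall>g\<in>G. a g \<in> D \<Longrightarrow> x \<in> ideal_gen D G"
  unfolding ideal_gen_def by blast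

lemma ideal_gen_props:
  assumes D: "subring_of D" and G: "finite G" "G \<subseteq> D"
  shows "ideal_of D (ideal_gen D G)" "G \<subseteq> ideal_gen D G"
    "\<And>J. ideal_of D J \<Longrightarrow> G \<subseteq> J \<Longrightarrow> ideal_gen D G \<subseteq> J"
proof -
  show sub: "ideal_gen D G \<subseteq> J" if J: "ideal_of D J" "G \<subseteq> J" for J
  proof
    fix x assume "x \<in> ideal_gen D G"
    then obtain a where x: "x = (\<Sum>g\<in>G. a g * g)" and a: "\<forall>g\<in>G. a g \<in> D"
      unfolding ideal_gen_def by blast
    show "x \<in> J" unfolding x
      apply (rule sub_sum[of D])
      using J a G by (auto simp: ideal_of_def submodule_of_def)
  qed
  show "G \<subseteq> ideal_gen D G"
  proof
    fix g assume g: "g \<in> G"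
    let ?a = "\<lambda>h. if h = g then 1 else (0::'a)"
    have "(\<Sum>h\<in>G. ?a h * h) = g"
      proof -
      have "(\<Sum>h\<in>G. ?a h * h) = (\<Sum>h\<in>G. if h = g then h else 0)" by (intro sum.cong refl) simp
      also have "\<dots> = g" using g G(1) by (simp add: sum.delta)
      finally show ?thesis .
    qed
    moreover have "\<forall>h\<in>G. ?a h \<in> D" using D by (simp add: subring_of_def)
    ultimately have "\<exists>a. g = (\<Sum>h\<in>G. a h * h) \<and> (\<forall>h\<in>G. a h \<in> D)" by (intro exI[of _ ?a]) (simp only:)
    then show "g \<in> ideal_gen D G" unfolding ideal_gen_def by simp
  qed
  show "ideal_of D (ideal_gen D G)"
    unfolding ideal_of_def submodule_of_def
  proof (intro conjI ballI)
    have "ideal_gen D G \<subseteq> D" by (rule sub) (use D G in \<open>auto simp: ideal_of_def subring_submodule\<close>)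
    then show "ideal_gen D G \<subseteq> D" .
    have "(\<Sum>g\<in>G. (\<lambda>_. 0) g * g) = 0" by simp
    moreover have "\<forall>g\<in>G. (\<lambda>_. (0::'a)) g \<in> D" using D by (simp add: subring_of_def)
    ultimately have "\<exists>a. 0 = (\<Sum>h\<in>G. a h * h) \<and> (\<forall>h\<in>G. a h \<in> D)" by (intro exI[of _ "\<lambda>_. 0"]) (simp only:)
    then show "0 \<in> ideal_gen D G" unfolding ideal_gen_def by simp
  next
    fix x y assume "x \<in> ideal_gen D G" "y \<in> ideal_gen D G"
    then obtain a b where x: "x = (\<Sum>g\<in>G. a g * g)" and a: "\<forall>g\<in>G. a g \<in> D"
      and y: "y = (\<Sum>g\<in>G. b g * g)" and b: "\<forall>g\<in>G. b g \<in> D"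
      unfolding ideal_gen_def by blast
    have "x + y = (\<Sum>g\<in>G. (a g + b g) * g)" by (simp add: x y distrib_right sum.distrib)
    moreover have "\<forall>g\<in>G. a g + b g \<in> D" using a b D by (simp add: subring_of_def)
    ultimately show "x + y \<in> ideal_gen D G" by (rule ideal_genI)
  next
    fix d x assume d: "d \<in> D" and "x \<in> ideal_gen D G"
    then obtain a where x: "x = (\<Sum>g\<in>G. a g * g)" and a: "\<forall>g\<in>G. a g \<in> D"
      unfolding ideal_gen_def by blast
    have "d * x = (\<Sum>g\<in>G. (d * a g) * g)" by (simp add: x sum_distrib_left mult.assoc)
    moreover have "\<forall>g\<in>G. d * a g \<in> D" using a d D by (simp add: subring_of_def)
    ultimately show "d * x \<in> ideal_gen D G" by (rule ideal_genI)
  qed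
qed

definition cont :: "'k::field set \<Rightarrow> 'k poly \<Rightarrow> 'k set" where
  "cont D s = ideal_gen D (range (coeff s))"

lemma finite_range_coeff: "finite (range (coeff s))"
proof -
  have "range (coeff s) \<subseteq> insert 0 (coeff s ` {..degree s})"
    by (auto simp: image_iff) (metis atMost_iff coeff_eq_0 not_le)
  then show ?thesis by (rule finite_subset) simp
qed

lemma cont_props:
  assumes D: "subring_of D" and s: "s \<in> polys_over D"
  shows "ideal_of D (cont D s)" "\<And>k. coeff s k \<in> cont D s"
    "\<And>J. ideal_of D J \<Longrightarrow> cont D s \<subseteq> J \<longleftrightarrow> s \<in> polys_over J"
proof -
  have G: "range (coeff s) \<subseteq> D" using s by (auto simp: polys_over_def)
  note P = ideal_gen_props[OF D finite_range_coeff G]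
  show "ideal_of D (cont D s)" using P(1) by (simp add: cont_def)
  show "\<And>k. coeff s k \<in> cont D s" using P(2) by (auto simp: cont_def)
  then show "\<And>J. ideal_of D J \<Longrightarrow> cont D s \<subseteq> J \<longleftrightarrow> s \<in> polys_over J"
    using P(3) by (auto simp: polys_over_def cont_def)
qed

lemma ideal_basic:
  assumes D: "subring_of D" and J: "ideal_of D J"
  shows "0 \<in> J" "\<And>x y. x \<in> J \<Longrightarrow> y \<in> J \<Longrightarrow> x + y \<in> J"
    "\<And>d x. d \<in> D \<Longrightarrow> x \<in> J \<Longrightarrow> d * x \<in> J"
    "\<And>d x. d \<in> D \<Longrightarrow> x \<in> J \<Longrightarrow> x * d \<in> J"
    "\<And>x. x \<in> J \<Longrightarrow> - x \<in> J" "\<And>x y. x \<in> J \<Longrightarrow> y \<in> J \<Longrightarrow> x - y \<in> J"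
    "J \<subseteq> D" "submodule_of D J"
proof -
  show "0 \<in> J" "\<And>x y. x \<in> J \<Longrightarrow> y \<in> J \<Longrightarrow> x + y \<in> J"
    "\<And>d x. d \<in> D \<Longrightarrow> x \<in> J \<Longrightarrow> d * x \<in> J" "J \<subseteq> D" "submodule_of D J"
    using J by (auto simp: ideal_of_def submodule_of_def)
  then show "\<And>d x. d \<in> D \<Longrightarrow> x \<in> J \<Longrightarrow> x * d \<in> J" by (simp add: mult.commute)
  have m1: "-1 \<in> D" using D unfolding subring_of_def by (metis diff_0)
  show neg: "\<And>x. x \<in> J \<Longrightarrow> - x \<in> J"
    using \<open>\<And>d x. d \<in> D \<Longrightarrow> x \<in> J \<Longrightarrow> d * x \<in> J\<close>[OF m1] by simp
  show "\<And>x y. x \<in> J \<Longrightarrow> y \<in> J \<Longrightarrow> x - y \<in> J"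
    using neg \<open>\<And>x y. x \<in> J \<Longrightarrow> y \<in> J \<Longrightarrow> x + y \<in> J\<close> by (metis diff_conv_add_uminus)
qed

lemma prime_poly:
  assumes D: "subring_of D" and Q: "prime_ideal_of D Q"
    and f: "f \<in> polys_over D" and g: "g \<in> polys_over D" and fg: "f * g \<in> polys_over Q"
  shows "f \<in> polys_over Q \<or> g \<in> polys_over Q"
proof (rule ccontr)
  assume "\<not> ?thesis"
  then have ex1: "\<exists>i. coeff f i \<notin> Q" and ex2: "\<exists>j. coeff g j \<notin> Q" by (auto simp: polys_over_def)
  define i where "i = (LEAST i. coeff f i \<notin> Q)"
  define j where "j = (LEAST j. coeff g j \<notin> Q)"
  have fi: "coeff f i \<notin> Q" unfolding i_def by (rule LeastI_ex[OF ex1])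
  have gj: "coeff g j \<notin> Q" unfolding j_def by (rule LeastI_ex[OF ex2])
  have fa: "coeff f a \<in> Q" if "a < i" for a using not_less_Least[of a "\<lambda>i. coeff f i \<notin> Q"] that i_def by blast
  have gb: "coeff g b \<in> Q" if "b < j" for b using not_less_Least[of b "\<lambda>i. coeff g i \<notin> Q"] that j_def by blast
  have QI: "ideal_of D Q" using Q by (simp add: prime_ideal_of_def)
  note QB = ideal_basic[OF D QI]
  have dec: "coeff (f*g) (i+j) = coeff f i * coeff g j + (\<Sum>a\<in>{..i+j}-{i}. coeff f a * coeff g (i+j-a))"
    unfolding coeff_mult by (subst sum.remove[of _ i]) auto
  have rest: "(\<Sum>a\<in>{..i+j}-{i}. coeff f a * coeff g (i+j-a)) \<in> Q"
  proof (rule sub_sum[OF QB(8)])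
    fix a assume a: "a \<in> {..i+j}-{i}"
    show "coeff f a * coeff g (i+j-a) \<in> Q"
    proof (cases "a < i")
      case True then show ?thesis using fa g QB(4) by (auto simp: polys_over_def)
    next
      case False
      then have "i + j - a < j" using a by auto
      then show ?thesis using gb f QB(3) by (auto simp: polys_over_def)
    qed
  qed simp
  have "coeff (f*g) (i+j) \<in> Q" using fg by (simp add: polys_over_def)
  then have "coeff f i * coeff g j \<in> Q" using QB(6)[OF _ rest] dec by (metis add_diff_cancel_right')
  moreover have "coeff f i \<in> D" "coeff g j \<in> D" using f g by (auto simp: polys_over_def)
  moreover have "\<forall>a\<in>D. \<forall>b\<in>D. a * b \<in> Q \<longrightarrow> a \<in> Q \<or> b \<in> Q" using Q by (simp add: prime_ideal_of_def)
  ultimately show False using fi gj by blast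
qed

lemma D_ideal: "subring_of D \<Longrightarrow> ideal_of D D"
  by (simp add: ideal_of_def subring_submodule)

lemma locsys_D:
  assumes D: "subring_of D" and F: "localizing_system D F" shows "D \<in> F"
proof -
  obtain I where I: "I \<in> F" using F unfolding localizing_system_def by blast
  have "ideal_of D I" using F I unfolding localizing_system_def by blast
  then have "I \<subseteq> D" by (simp add: ideal_of_def)
  moreover have "\<forall>I\<in>F. \<forall>J. ideal_of D J \<and> I \<subseteq> J \<longrightarrow> J \<in> F" using F unfolding localizing_system_def by blast
  ultimately show ?thesis using I D_ideal[OF D] by blast
qed

lemma exists_prime_avoiding:
  assumes D: "subring_of D" and F: "loc_sys_finite_type D F" and I: "ideal_of D I" "I \<notin> F"
  shows "\<exists>Q. prime_ideal_of D Q \<and> I \<subseteq> Q \<and> Q \<notin> F"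
proof -
  have LF: "localizing_system D F" using F by (simp add: loc_sys_finite_type_def)
  have trans: "\<And>A B. A \<in> F \<Longrightarrow> ideal_of D B \<Longrightarrow> (\<forall>i\<in>A. colon_D D B i \<in> F) \<Longrightarrow> B \<in> F"
    using LF unfolding localizing_system_def by blast
  have up: "\<And>A B. A \<in> F \<Longrightarrow> ideal_of D B \<Longrightarrow> A \<subseteq> B \<Longrightarrow> B \<in> F"
    using LF unfolding localizing_system_def by blast
  define \<A> where "\<A> = {J. ideal_of D J \<and> I \<subseteq> J \<and> J \<notin> F}"
  have "\<exists>M\<in>\<A>. \<forall>X\<in>\<A>. M \<subseteq> X \<longrightarrow> X = M"
  proof (rule subset_Zorn_nonempty)
    show "\<A> \<noteq> {}" using I by (auto simp: \<A>_def)
  next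
    fix C assume C: "C \<noteq> {}" "subset.chain \<A> C"
    then have CA: "C \<subseteq> \<A>" and ch: "\<And>X Y. X \<in> C \<Longrightarrow> Y \<in> C \<Longrightarrow> X \<subseteq> Y \<or> Y \<subseteq> X"
      by (auto simp: subset_chain_def)
    have ids: "\<And>X. X \<in> C \<Longrightarrow> ideal_of D X" using CA by (auto simp: \<A>_def)
    obtain X0 where X0: "X0 \<in> C" using C by auto
    have idU: "ideal_of D (\<Union>C)"
      unfolding ideal_of_def submodule_of_def
    proof (intro conjI ballI)
      show "\<Union>C \<subseteq> D" using ids ideal_basic(7)[OF D] by blast
      show "0 \<in> \<Union>C" using X0 ids ideal_basic(1)[OF D] by blast
    next
      fix x y assume "x \<in> \<Union>C" "y \<in> \<Union>C"
      then obtain X Y where XY: "X \<in> C" "Y \<in> C" "x \<in> X" "y \<in> Y" by auto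
      show "x + y \<in> \<Union>C"
      proof (cases "X \<subseteq> Y")
        case True then show ?thesis using XY ids ideal_basic(2)[OF D] by blast
      next
        case False then have "Y \<subseteq> X" using ch XY by blast
        then show ?thesis using XY ids ideal_basic(2)[OF D] by blast
      qed
    next
      fix d x assume "d \<in> D" "x \<in> \<Union>C"
      then show "d * x \<in> \<Union>C" using ids ideal_basic(3)[OF D] by blast
    qed
    have IU: "I \<subseteq> \<Union>C" using X0 CA by (auto simp: \<A>_def)
    have "\<Union>C \<notin> F"
    proof
      assume "\<Union>C \<in> F"
      then obtain J where J: "J \<in> F" "J \<subseteq> \<Union>C" "finitely_generated_ideal D J"
        using F unfolding loc_sys_finite_type_def by blast
      then obtain G where G: "finite G" "G \<subseteq> D" "J = ideal_gen D G"
        unfolding finitely_generated_ideal_def by blast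
      have "G \<subseteq> \<Union>C" using ideal_gen_props(2)[OF D G(1,2)] G(3) J(2) by blast
      then obtain B where B: "B \<in> C" "G \<subseteq> B" using finite_subset_Union_chain[OF G(1) _ C(1,2)] by blast
      have "J \<subseteq> B" using ideal_gen_props(3)[OF D G(1,2) ids[OF B(1)] B(2)] G(3) by simp
      then have "B \<in> F" using up[OF J(1) ids[OF B(1)]] by blast
      then show False using B(1) CA by (auto simp: \<A>_def)
    qed
    then show "\<Union>C \<in> \<A>" using idU IU by (simp add: \<A>_def)
  qed
  then obtain M where M: "M \<in> \<A>" and max: "\<And>X. X \<in> \<A> \<Longrightarrow> M \<subseteq> X \<Longrightarrow> X = M" by blast
  have MI: "ideal_of D M" "I \<subseteq> M" "M \<notin> F" using M by (auto simp: \<A>_def)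
  note MB = ideal_basic[OF D MI(1)]
  have DF: "D \<in> F" using locsys_D[OF D LF] .
  have MD: "M \<noteq> D" using MI(3) DF by auto
  define ext where "ext a = {m + a * d | m d. m \<in> M \<and> d \<in> D}" for a
  have ext_ideal: "ideal_of D (ext a)" if a: "a \<in> D" for a
    unfolding ideal_of_def submodule_of_def
  proof (intro conjI ballI)
    show "ext a \<subseteq> D" using a MB(7) D unfolding ext_def subring_of_def by blast
    have "0 = 0 + a * 0" by simp
    then show "0 \<in> ext a" using MB(1) D unfolding ext_def subring_of_def by blast
  next
    fix x y assume "x \<in> ext a" "y \<in> ext a"
    then obtain m d m' d' where "x = m + a * d" "y = m' + a * d'" "m \<in> M" "d \<in> D" "m' \<in> M" "d' \<in> D"
      unfolding ext_def by blast
    moreover have "x + y = (m + m') + a * (d + d')" using calculation by (simp add: algebra_simps)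
    ultimately show "x + y \<in> ext a" using MB(2) D unfolding ext_def subring_of_def by blast
  next
    fix e x assume e: "e \<in> D" "x \<in> ext a"
    then obtain m d where "x = m + a * d" "m \<in> M" "d \<in> D" unfolding ext_def by blast
    moreover have "e * x = e * m + a * (e * d)" using calculation by (simp add: algebra_simps)
    ultimately show "e * x \<in> ext a" using MB(3) D e unfolding ext_def subring_of_def by blast
  qed
  have ext_M: "M \<subseteq> ext a" for a
  proof
    fix m assume "m \<in> M"
    moreover have "m = m + a * 0" by simp
    ultimately show "m \<in> ext a" using D unfolding ext_def subring_of_def by blast
  qed
  have ext_a: "a \<in> ext a" if "a \<in> D" for a
  proof -
    have "a = 0 + a * 1" by simp
    then show ?thesis using MB(1) D unfolding ext_def subring_of_def by blast
  qed
  have extF: "ext a \<in> F" if a: "a \<in> D" "a \<notin> M" for a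
  proof (rule ccontr)
    assume "ext a \<notin> F"
    then have "ext a \<in> \<A>" using ext_ideal[OF a(1)] ext_M MI(2) by (auto simp: \<A>_def)
    then have "ext a = M" using max ext_M by blast
    then show False using ext_a[OF a(1)] a(2) by blast
  qed
  have prime: "prime_ideal_of D M"
    unfolding prime_ideal_of_def
  proof (intro conjI MI(1) MD ballI impI)
    fix a b assume ab: "a \<in> D" "b \<in> D" "a * b \<in> M"
    show "a \<in> M \<or> b \<in> M"
    proof (rule ccontr)
      assume "\<not> (a \<in> M \<or> b \<in> M)"
      then have na: "a \<notin> M" and nb: "b \<notin> M" by auto
      have "\<forall>i\<in>ext a. colon_D D M i \<in> F"
      proof
        fix i assume "i \<in> ext a"
        then obtain m d where i: "i = m + a * d" "m \<in> M" "d \<in> D" unfolding ext_def by blast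
        have cid: "ideal_of D (colon_D D M i)"
          unfolding ideal_of_def submodule_of_def colon_D_def
        proof (intro conjI ballI)
          show "0 \<in> {x \<in> D. x * i \<in> M}" using MB(1) D by (simp add: subring_of_def)
        next
          fix x y assume "x \<in> {x \<in> D. x * i \<in> M}" "y \<in> {x \<in> D. x * i \<in> M}"
          then show "x + y \<in> {x \<in> D. x * i \<in> M}" using MB(2) D
            by (auto simp: subring_of_def distrib_right)
        next
          fix e x assume "e \<in> D" "x \<in> {x \<in> D. x * i \<in> M}"
          then show "e * x \<in> {x \<in> D. x * i \<in> M}" using MB(3) D
            by (auto simp: subring_of_def mult.assoc)
        qed auto
        have "ext b \<subseteq> colon_D D M i"
        proof
          fix x assume "x \<in> ext b"
          then obtain m' d' where x: "x = m' + b * d'" "m' \<in> M" "d' \<in> D" unfolding ext_def by blast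
          have xD: "x \<in> D" using ext_ideal[OF ab(2)] \<open>x \<in> ext b\<close> by (auto simp: ideal_of_def)
          have iD: "i \<in> D" using i MB(7) D ab(1) by (auto simp: subring_of_def)
          have "x * i = m' * i + m * (b * d') + (a * b) * (d * d')"
            using x i by (simp add: algebra_simps)
          moreover have c1: "m' * i \<in> M" using MB(4)[OF iD x(2)] .
          moreover have bd: "b * d' \<in> D" "d * d' \<in> D" using ab(2) x(3) i(3) D by (auto simp: subring_of_def)
          have c2: "m * (b * d') \<in> M" using MB(4)[OF bd(1) i(2)] .
          have c3: "(a * b) * (d * d') \<in> M" using MB(4)[OF bd(2) ab(3)] .
          ultimately have "x * i \<in> M" using MB(2)[OF MB(2)[OF c1 c2] c3] by simp
          then show "x \<in> colon_D D M i" using xD by (simp add: colon_D_def)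
        qed
        then show "colon_D D M i \<in> F" using up[OF extF[OF ab(2) nb] cid] by blast
      qed
      then have "M \<in> F" using trans[OF extF[OF ab(1) na] MI(1)] by blast
      then show False using MI(3) by blast
    qed
  qed
  show ?thesis using prime MI by blast
qed

lemma colon_ideal:
  assumes D: "subring_of D" and E: "submodule_of D E"
  shows "ideal_of D {d \<in> D. d * z \<in> E}"
  unfolding ideal_of_def submodule_of_def
proof (intro conjI ballI)
  show "0 \<in> {d \<in> D. d * z \<in> E}" using E D by (simp add: subring_of_def submodule_of_def)
next
  fix x y assume "x \<in> {d \<in> D. d * z \<in> E}" "y \<in> {d \<in> D. d * z \<in> E}"
  then show "x + y \<in> {d \<in> D. d * z \<in> E}" using E D
    by (auto simp: subring_of_def submodule_of_def distrib_right)
next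
  fix e x assume "e \<in> D" "x \<in> {d \<in> D. d * z \<in> E}"
  then show "e * x \<in> {d \<in> D. d * z \<in> E}" using E D
    by (auto simp: subring_of_def submodule_of_def mult.assoc)
qed auto

lemma poly_of_fg:
  assumes D: "subring_of D" and G: "finite G" "G \<subseteq> D"
  shows "\<exists>s\<in>polys_over D. cont D s = ideal_gen D G"
proof -
  obtain xs where xs: "set xs = G" using finite_list[OF G(1)] by blast
  define s where "s = Poly xs"
  have cs: "coeff s = nth_default 0 xs" by (simp add: s_def)
  have r1: "range (coeff s) \<subseteq> insert 0 G"
  proof
    fix y assume "y \<in> range (coeff s)"
    then obtain n where "y = coeff s n" by auto
    then show "y \<in> insert 0 G" using xs cs by (cases "n < length xs") (auto simp: nth_default_def)
  qed
  have r2: "G \<subseteq> range (coeff s)"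
  proof
    fix g assume "g \<in> G"
    then obtain n where "n < length xs" "xs ! n = g" using xs by (auto simp: in_set_conv_nth)
    then show "g \<in> range (coeff s)" using cs by (metis nth_default_nth rangeI)
  qed
  have z: "0 \<in> D" using D by (simp add: subring_of_def)
  have RD: "range (coeff s) \<subseteq> D" using r1 G z by auto
  have sD: "s \<in> polys_over D" using RD unfolding polys_over_def by auto
  note P1 = ideal_gen_props[OF D G]
  note P2 = ideal_gen_props[OF D finite_range_coeff RD]
  have "ideal_gen D (range (coeff s)) \<subseteq> ideal_gen D G"
    using P1(1,2) r1 ideal_basic(1)[OF D P1(1)] by (intro P2(3)) auto
  moreover have "ideal_gen D G \<subseteq> ideal_gen D (range (coeff s))"
    using P2(1,2) r2 by (intro P1(3)) auto
  ultimately show ?thesis using sD unfolding cont_def by blast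
qed

lemma locsys_up:
  "localizing_system D F \<Longrightarrow> A \<in> F \<Longrightarrow> ideal_of D B \<Longrightarrow> A \<subseteq> B \<Longrightarrow> B \<in> F"
  unfolding localizing_system_def by blast

lemma S_char:
  assumes D: "subring_of D" and F: "loc_sys_finite_type D F"
  shows "s \<in> S_of D F \<longleftrightarrow> s \<in> polys_over D \<and> cont D s \<in> F"
proof -
  have LF: "localizing_system D F" using F by (simp add: loc_sys_finite_type_def)
  show ?thesis
  proof
    assume s: "s \<in> S_of D F"
    then have sD: "s \<in> polys_over D" by (simp add: S_of_def)
    have "cont D s \<in> F"
    proof (rule ccontr)
      assume "cont D s \<notin> F"
      then obtain Q where Q: "prime_ideal_of D Q" "cont D s \<subseteq> Q" "Q \<notin> F"
        using exists_prime_avoiding[OF D F cont_props(1)[OF D sD]] by blast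
      have "s \<in> polys_over Q" using cont_props(3)[OF D sD] Q by (simp add: prime_ideal_of_def)
      then show False using s Q unfolding S_of_def Spec_def by blast
    qed
    then show "s \<in> polys_over D \<and> cont D s \<in> F" using sD by blast
  next
    assume s: "s \<in> polys_over D \<and> cont D s \<in> F"
    show "s \<in> S_of D F" unfolding S_of_def
    proof (clarsimp simp: s)
      fix Q assume Q: "Q \<in> Spec D" "Q \<notin> F" "s \<in> polys_over Q"
      have QI: "ideal_of D Q" using Q by (simp add: Spec_def prime_ideal_of_def)
      then have "cont D s \<subseteq> Q" using cont_props(3)[OF D] s Q by blast
      then show False using locsys_up[OF LF _ QI] s Q by blast
    qed
  qed
qed

lemma F_gen:
  assumes D: "subring_of D" and F: "loc_sys_finite_type D F" and I: "I \<in> F"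
  shows "\<exists>s\<in>S_of D F. cont D s \<subseteq> I"
proof -
  obtain J where J: "J \<in> F" "J \<subseteq> I" "finitely_generated_ideal D J"
    using F I unfolding loc_sys_finite_type_def by blast
  then obtain G where G: "finite G" "G \<subseteq> D" "J = ideal_gen D G"
    unfolding finitely_generated_ideal_def by blast
  obtain s where s: "s \<in> polys_over D" "cont D s = J" using poly_of_fg[OF D G(1,2)] G(3) by blast
  have "s \<in> S_of D F" using S_char[OF D F] s J by simp
  then show ?thesis using s J by blast
qed

lemma fract_add_same: "s \<noteq> 0 \<Longrightarrow> Fract a s + Fract b s = Fract (a + b) (s::'a::idom)"
  by (simp add: eq_fract algebra_simps)

lemma fract_sum_same:
  assumes "s \<noteq> 0" shows "(\<Sum>k\<in>A. Fract (p k) s) = Fract (\<Sum>k\<in>A. p k) (s::'a::idom)"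
proof (induction A rule: infinite_finite_induct)
  case (infinite A) then show ?case by (simp add: Zero_fract_def eq_fract assms)
next
  case empty then show ?case by (simp add: Zero_fract_def eq_fract assms)
next
  case (insert x F) then show ?case by (simp add: assms eq_fract algebra_simps)
qed

lemma zero_ideal: "subring_of D \<Longrightarrow> ideal_of D {0}"
  by (simp add: ideal_of_def submodule_of_def subring_of_def)

lemma one_polys: "subring_of D \<Longrightarrow> 1 \<in> polys_over D"
  by (simp add: polys_over_def subring_of_def coeff_1)

lemma S_in_target:
  assumes D: "subring_of D" and F: "loc_sys_finite_type D F"
  shows "mult_subset D (S_of D F) \<and> ext_saturated D (S_of D F)"
proof -
  have LF: "localizing_system D F" using F by (simp add: loc_sys_finite_type_def)
  have z0: "{0} \<notin> F" using LF by (simp add: localizing_system_def)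
  have one: "1 \<in> S_of D F"
  proof -
    have p1: "1 \<in> polys_over D" using one_polys[OF D] .
    have "D \<subseteq> cont D 1"
    proof
      fix d assume "d \<in> D"
      moreover have "coeff 1 0 \<in> cont D 1" using cont_props(2)[OF D p1] .
      then have "1 \<in> cont D 1" by simp
      ultimately have "d * 1 \<in> cont D 1" using ideal_basic(3)[OF D cont_props(1)[OF D p1]] by blast
      then show "d \<in> cont D 1" by simp
    qed
    then have "cont D 1 = D" using ideal_basic(7)[OF D cont_props(1)[OF D p1]] by blast
    then show ?thesis using S_char[OF D F] p1 locsys_D[OF D LF] by simp
  qed
  have zero: "0 \<notin> S_of D F"
  proof
    assume "0 \<in> S_of D F"
    then have c: "cont D 0 \<in> F" and p0: "0 \<in> polys_over D" using S_char[OF D F] by auto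
    have "cont D 0 \<subseteq> {0}" using cont_props(3)[OF D p0 zero_ideal[OF D]] by (simp add: polys_over_def)
    then have "{0} \<in> F" using locsys_up[OF LF c zero_ideal[OF D]] by blast
    then show False using z0 by blast
  qed
  have mult: "s * t \<in> S_of D F" if s: "s \<in> S_of D F" and t: "t \<in> S_of D F" for s t
  proof -
    have sD: "s \<in> polys_over D" and tD: "t \<in> polys_over D" using s t by (auto simp: S_of_def)
    have stD: "s * t \<in> polys_over D" using poly_mult_closed(1)[OF D subring_submodule[OF D] sD tD] .
    show ?thesis unfolding S_of_def
    proof (clarsimp simp: stD)
      fix Q assume Q: "Q \<in> Spec D" "Q \<notin> F" "s * t \<in> polys_over Q"
      then have "s \<in> polys_over Q \<or> t \<in> polys_over Q"
        using prime_poly[OF D _ sD tD] by (simp add: Spec_def)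
      then show False using s t Q unfolding S_of_def by blast
    qed
  qed
  have key: "polys_over P \<inter> S_of D F = {} \<longleftrightarrow> P \<notin> F" if P: "P \<in> Spec D" for P
  proof
    assume "polys_over P \<inter> S_of D F = {}"
    show "P \<notin> F"
    proof
      assume "P \<in> F"
      then obtain s where s: "s \<in> S_of D F" "cont D s \<subseteq> P" using F_gen[OF D F] by blast
      have PI: "ideal_of D P" using P by (simp add: Spec_def prime_ideal_of_def)
      have "s \<in> polys_over P" using cont_props(3)[OF D _ PI] s by (simp add: S_of_def)
      then show False using s \<open>polys_over P \<inter> S_of D F = {}\<close> by blast
    qed
  next
    assume "P \<notin> F"
    then show "polys_over P \<inter> S_of D F = {}" using P unfolding S_of_def by blast
  qed
  have "{polys_over P | P. P \<in> Spec D \<and> polys_over P \<inter> S_of D F = {}}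
      = {polys_over Q | Q. Q \<in> Spec D \<and> Q \<notin> F}"
  proof -
    have "\<forall>P. (P \<in> Spec D \<and> polys_over P \<inter> S_of D F = {}) = (P \<in> Spec D \<and> P \<notin> F)"
      using key by blast
    then show ?thesis by simp
  qed
  then have "ext_saturation D (S_of D F) = S_of D F"
    by (simp only: ext_saturation_def S_of_def)
  then have "ext_saturated D (S_of D F)"
    unfolding ext_saturated_def by simp
  moreover have "mult_subset D (S_of D F)"
    unfolding mult_subset_def using one zero mult by (auto simp: S_of_def)
  ultimately show ?thesis by blast
qed

lemma recover:
  assumes D: "subring_of D" and F: "loc_sys_finite_type D F"
  shows "F = {I. ideal_of D I \<and> (\<exists>s\<in>S_of D F. cont D s \<subseteq> I)}"
proof -
  have LF: "localizing_system D F" using F by (simp add: loc_sys_finite_type_def)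
  show ?thesis
  proof (intro set_eqI iffI)
    fix I assume I: "I \<in> F"
    then have "ideal_of D I" using LF unfolding localizing_system_def by blast
    then show "I \<in> {I. ideal_of D I \<and> (\<exists>s\<in>S_of D F. cont D s \<subseteq> I)}" using F_gen[OF D F I] by blast
  next
    fix I assume "I \<in> {I. ideal_of D I \<and> (\<exists>s\<in>S_of D F. cont D s \<subseteq> I)}"
    then obtain s where I: "ideal_of D I" "s \<in> S_of D F" "cont D s \<subseteq> I" by blast
    then have "cont D s \<in> F" using S_char[OF D F] by blast
    then show "I \<in> F" using locsys_up[OF LF _ I(1) I(3)] by blast
  qed
qed

lemma prod_in_S:
  assumes S: "mult_subset D S" and A: "finite A" and t: "\<forall>k\<in>A. t k \<in> S"
  shows "prod t A \<in> S"
  using A t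
proof (induction A rule: finite_induct)
  case empty then show ?case using S by (simp add: mult_subset_def)
next
  case (insert x F) then show ?case using S by (simp add: mult_subset_def)
qed

lemma prod_polys:
  assumes D: "subring_of D" and t: "\<forall>k\<in>A. t k \<in> polys_over D"
  shows "prod t A \<in> polys_over D"
  using t
proof (induction A rule: infinite_finite_induct)
  case (infinite A) then show ?case using one_polys[OF D] by simp
next
  case empty then show ?case using one_polys[OF D] by simp
next
  case (insert x F) then show ?case using poly_mult_closed(1)[OF D subring_submodule[OF D]] by simp
qed

lemma surj_part:
  assumes D: "subring_of D" and S: "mult_subset D S" and sat: "ext_saturated D S"
  shows "loc_sys_finite_type D {I. ideal_of D I \<and> (\<exists>s\<in>S. cont D s \<subseteq> I)}
    \<and> S_of D {I. ideal_of D I \<and> (\<exists>s\<in>S. cont D s \<subseteq> I)} = S"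
proof -
  define FS where "FS = {I. ideal_of D I \<and> (\<exists>s\<in>S. cont D s \<subseteq> I)}"
  have SD: "S \<subseteq> polys_over D" and one: "1 \<in> S" and zero: "0 \<notin> S"
    and mul: "\<And>s t. s \<in> S \<Longrightarrow> t \<in> S \<Longrightarrow> s * t \<in> S"
    using S by (auto simp: mult_subset_def)
  have DF: "D \<in> FS" unfolding FS_def using D_ideal[OF D] one cont_props(1)[OF D one_polys[OF D]]
    ideal_basic(7)[OF D] by blast
  have z: "{0} \<notin> FS"
  proof
    assume "{0} \<in> FS"
    then obtain s where s: "s \<in> S" "cont D s \<subseteq> {0}" unfolding FS_def by blast
    then have "\<forall>k. coeff s k = 0" using cont_props(2)[OF D] SD by blast
    then have "s = 0" by (simp add: poly_eqI)
    then show False using s zero by simp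
  qed
  have trans: "J \<in> FS" if I: "I \<in> FS" and J: "ideal_of D J" and col: "\<forall>i\<in>I. colon_D D J i \<in> FS" for I J
  proof -
    obtain s where s: "s \<in> S" "cont D s \<subseteq> I" using I unfolding FS_def by blast
    have sD: "s \<in> polys_over D" using s SD by blast
    have "\<forall>k. \<exists>t. t \<in> S \<and> cont D t \<subseteq> colon_D D J (coeff s k)"
    proof
      fix k
      have "coeff s k \<in> I" using s cont_props(2)[OF D sD] by blast
      then have "colon_D D J (coeff s k) \<in> FS" using col by blast
      then show "\<exists>t. t \<in> S \<and> cont D t \<subseteq> colon_D D J (coeff s k)" unfolding FS_def by blast
    qed
    from choice[OF this] obtain t where t0: "\<forall>k. t k \<in> S \<and> cont D (t k) \<subseteq> colon_D D J (coeff s k)" by blast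
    then have t: "\<And>k. t k \<in> S" "\<And>k. cont D (t k) \<subseteq> colon_D D J (coeff s k)" by auto
    have tD: "\<And>k. t k \<in> polys_over D" using t(1) SD by blast
    define T where "T = (\<Prod>k\<le>degree s. t k)"
    have TS: "T \<in> S" unfolding T_def by (rule prod_in_S[OF S]) (simp_all add: t)
    have TD: "T \<in> polys_over D" using TS SD by blast
    have colid: "ideal_of D (colon_D D J c)" for c
      using colon_ideal[OF D ideal_basic(8)[OF D J], of c] by (simp add: colon_D_def)
    have Tcol: "coeff T m * coeff s i \<in> J" if i: "i \<le> degree s" for i m
    proof -
      have eq: "T = t i * (\<Prod>k\<in>{..degree s}-{i}. t k)" unfolding T_def using i
        by (subst prod.remove[of _ i]) auto
      have a: "t i \<in> polys_over (colon_D D J (coeff s i))"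
        using cont_props(3)[OF D tD colid] t(2) by blast
      have b: "(\<Prod>k\<in>{..degree s}-{i}. t k) \<in> polys_over D"
        by (rule prod_polys[OF D]) (simp add: tD)
      have "t i * (\<Prod>k\<in>{..degree s}-{i}. t k) \<in> polys_over (colon_D D J (coeff s i))"
        by (rule poly_mult_closed(1)[OF D ideal_basic(8)[OF D colid] a b])
      then have "T \<in> polys_over (colon_D D J (coeff s i))" using eq by simp
      then show ?thesis by (simp add: polys_over_def colon_D_def)
    qed
    have "\<forall>n. coeff (s * T) n \<in> J"
    proof
      fix n
      show "coeff (s * T) n \<in> J" unfolding coeff_mult
      proof (rule sub_sum[OF ideal_basic(8)[OF D J]])
        fix i
        show "coeff s i * coeff T (n - i) \<in> J"
        proof (cases "i \<le> degree s")
          case True then show ?thesis using Tcol[OF True, of "n - i"] by (simp add: mult.commute)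
        next
          case False then show ?thesis using ideal_basic(1)[OF D J] by (simp add: coeff_eq_0)
        qed
      qed simp
    qed
    then have stJ: "s * T \<in> polys_over J" by (simp add: polys_over_def)
    have "s * T \<in> S" using mul s TS by blast
    moreover have "cont D (s * T) \<subseteq> J" using cont_props(3)[OF D _ J] stJ calculation SD by blast
    ultimately show "J \<in> FS" unfolding FS_def using J by blast
  qed
  have LF: "localizing_system D FS"
    unfolding localizing_system_def
  proof (intro conjI)
    show "FS \<noteq> {}" using DF by blast
    show "\<forall>I\<in>FS. ideal_of D I" unfolding FS_def by blast
    show "{0} \<notin> FS" using z .
    show "\<forall>I\<in>FS. \<forall>J. ideal_of D J \<and> I \<subseteq> J \<longrightarrow> J \<in> FS" unfolding FS_def by blast
    show "\<forall>I\<in>FS. \<forall>J. ideal_of D J \<and> (\<forall>i\<in>I. colon_D D J i \<in> FS) \<longrightarrow> J \<in> FS" using trans by blast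
  qed
  have FT: "loc_sys_finite_type D FS"
    unfolding loc_sys_finite_type_def
  proof (intro conjI LF ballI)
    fix I assume "I \<in> FS"
    then obtain s where s: "s \<in> S" "cont D s \<subseteq> I" unfolding FS_def by blast
    have sD: "s \<in> polys_over D" using s SD by blast
    have "cont D s \<in> FS" unfolding FS_def using s cont_props(1)[OF D sD] by blast
    moreover have "finitely_generated_ideal D (cont D s)"
    proof -
      have "range (coeff s) \<subseteq> D" using sD by (auto simp: polys_over_def)
      then show ?thesis unfolding finitely_generated_ideal_def cont_def
        using finite_range_coeff by blast
    qed
    ultimately show "\<exists>J\<in>FS. J \<subseteq> I \<and> finitely_generated_ideal D J" using s by blast
  qed
  have key: "(P \<in> Spec D \<and> polys_over P \<inter> S = {}) = (P \<in> Spec D \<and> P \<notin> FS)" for P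
  proof (cases "P \<in> Spec D")
    case True
    then have PI: "ideal_of D P" by (simp add: Spec_def prime_ideal_of_def)
    have "P \<in> FS \<longleftrightarrow> (\<exists>s\<in>S. s \<in> polys_over P)"
    proof
      assume "P \<in> FS"
      then obtain s where "s \<in> S" "cont D s \<subseteq> P" unfolding FS_def by blast
      then show "\<exists>s\<in>S. s \<in> polys_over P" using cont_props(3)[OF D _ PI] SD by blast
    next
      assume "\<exists>s\<in>S. s \<in> polys_over P"
      then obtain s where "s \<in> S" "s \<in> polys_over P" by blast
      then have "cont D s \<subseteq> P" using cont_props(3)[OF D _ PI] SD by blast
      then show "P \<in> FS" unfolding FS_def using PI \<open>s \<in> S\<close> by blast
    qed
    then show ?thesis using True by blast
  qed simp
  have "S_of D FS = ext_saturation D S"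
    unfolding S_of_def ext_saturation_def using key by simp
  then have "S_of D FS = S" using sat by (simp add: ext_saturated_def)
  then show ?thesis using FT unfolding FS_def by blast
qed

lemma const_polys: "c \<in> E \<Longrightarrow> 0 \<in> E \<Longrightarrow> [:c:] \<in> polys_over E"
  by (auto simp: polys_over_def coeff_pCons split: nat.split)

lemma ext_repr_aux:
  fixes D :: "'k::field set" and n :: nat and e :: "nat \<Rightarrow> 'k" and r :: "nat \<Rightarrow> 'k poly fract"
  assumes D: "subring_of D" and S: "mult_subset D S" and E: "submodule_of D E"
  shows "(\<forall>i<n. e i \<in> E \<and> r i \<in> loc_ring D S) \<Longrightarrow>
    \<exists>h t. h \<in> polys_over E \<and> t \<in> S \<and> (\<Sum>i<n. Fract [:e i:] 1 * r i) = Fract h t"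
proof (induction n)
  case 0
  have "(0::'k poly) \<in> polys_over E" using E by (simp add: polys_over_def submodule_of_def)
  moreover have "(1::'k poly) \<in> S" using S by (simp add: mult_subset_def)
  ultimately show ?case by (auto simp: Zero_fract_def)
next
  case (Suc n)
  then obtain h t where ht: "h \<in> polys_over E" "t \<in> S" "(\<Sum>i<n. Fract [:e i:] 1 * r i) = Fract h t" by auto
  have "r n \<in> loc_ring D S" "e n \<in> E" using Suc.prems by auto
  then obtain f s' where fs: "r n = Fract f s'" "f \<in> polys_over D" "s' \<in> S" unfolding loc_ring_def by blast
  have SD: "S \<subseteq> polys_over D" and zero: "0 \<notin> S" and mul: "\<And>a b. a \<in> S \<Longrightarrow> b \<in> S \<Longrightarrow> a * b \<in> S"
    using S by (auto simp: mult_subset_def)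
  have t0: "t \<noteq> 0" and s0: "s' \<noteq> 0" using ht fs zero by auto
  have z: "0 \<in> E" using E by (simp add: submodule_of_def)
  have c: "[:e n:] \<in> polys_over E" using const_polys[OF \<open>e n \<in> E\<close> z] .
  have p1: "h * s' \<in> polys_over E" using poly_mult_closed(1)[OF D E ht(1)] fs SD by blast
  have p2: "[:e n:] * f \<in> polys_over E" using poly_mult_closed(1)[OF D E c fs(2)] .
  have p3: "[:e n:] * f * t \<in> polys_over E" using poly_mult_closed(1)[OF D E p2] ht SD by blast
  have hE: "h * s' + [:e n:] * f * t \<in> polys_over E" using poly_add_closed[OF E p1 p3] .
  have tS: "t * s' \<in> S" using mul ht fs by blast
  have "(\<Sum>i<Suc n. Fract [:e i:] 1 * r i) = Fract h t + Fract ([:e n:] * f) s'"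
    using ht(3) fs(1) by simp
  also have "\<dots> = Fract (h * s' + [:e n:] * f * t) (t * s')" using t0 s0 by (simp add: algebra_simps)
  finally show ?case using hE tS by blast
qed

lemma ext_repr:
  fixes D :: "'k::field set"
  assumes D: "subring_of D" and S: "mult_subset D S" and E: "submodule_of D E"
    and x: "x \<in> ext_module D E S"
  shows "\<exists>h t. h \<in> polys_over E \<and> t \<in> S \<and> x = Fract h t"
proof -
  obtain n and e :: "nat \<Rightarrow> 'k" and r where x1: "x = (\<Sum>i<n. Fract [:e i:] 1 * r i)" and P: "\<forall>i<n. e i \<in> E \<and> r i \<in> loc_ring D S"
    using x unfolding ext_module_def by blast
  from ext_repr_aux[OF D S E P] obtain h t where "h \<in> polys_over E" "t \<in> S" "(\<Sum>i<n. Fract [:e i:] 1 * r i) = Fract h t"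
    by blast
  then show ?thesis using x1 by blast
qed

lemma const_monom: "[:c:] * monom 1 k = monom (c::'a::comm_ring_1) k"
  by (simp add: monom_0[symmetric] mult_monom)

lemma E_part:
  assumes D: "subring_of D" and F: "loc_sys_finite_type D F" and EF: "Fbar D E"
  shows "E_loc F E = inter_K (ext_module D E (S_of D F))"
proof -
  have E: "submodule_of D E" using EF by (simp add: Fbar_def)
  have MS: "mult_subset D (S_of D F)" using S_in_target[OF D F] by blast
  have zS: "0 \<notin> S_of D F" using MS by (simp add: mult_subset_def)
  show ?thesis
  proof (intro set_eqI iffI)
    fix z assume "z \<in> E_loc F E"
    then obtain I where I: "I \<in> F" "z \<in> colon E I" unfolding E_loc_def by blast
    obtain s where s: "s \<in> S_of D F" "cont D s \<subseteq> I" using F_gen[OF D F I(1)] by blast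
    have sD: "s \<in> polys_over D" using s by (simp add: S_of_def)
    have s0: "s \<noteq> 0" using s zS by auto
    define e where "e k = z * coeff s k" for k
    define r where "r k = Fract (monom 1 k) s" for k
    have eE: "e k \<in> E" for k
      using I(2) s(2) cont_props(2)[OF D sD, of k] unfolding colon_def e_def by blast
    have rL: "r k \<in> loc_ring D (S_of D F)" for k
    proof -
      have "monom 1 k \<in> polys_over D" using D by (simp add: polys_over_def subring_of_def)
      then show ?thesis unfolding loc_ring_def r_def using s(1) by blast
    qed
    have "(\<Sum>k<Suc (degree s). Fract [:e k:] 1 * r k) = (\<Sum>k<Suc (degree s). Fract (monom (e k) k) s)"
      by (simp add: r_def smult_monom)
    also have "\<dots> = Fract (\<Sum>k<Suc (degree s). monom (e k) k) s" by (rule fract_sum_same[OF s0])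
    also have "(\<Sum>k<Suc (degree s). monom (e k) k) = smult z s"
    proof (rule poly_eqI)
      fix n
      have "coeff (\<Sum>k<Suc (degree s). monom (e k) k) n = (\<Sum>k<Suc (degree s). if k = n then e k else 0)"
        by (simp add: coeff_sum)
      also have "\<dots> = (if n < Suc (degree s) then e n else 0)" by (simp add: sum.delta)
      also have "\<dots> = coeff (smult z s) n" by (auto simp: e_def coeff_eq_0)
      finally show "coeff (\<Sum>k<Suc (degree s). monom (e k) k) n = coeff (smult z s) n" .
    qed
    also have "Fract (smult z s) s = Fract [:z:] 1" using s0 by (simp add: eq_fract)
    finally have eq: "Fract [:z:] 1 = (\<Sum>k<Suc (degree s). Fract [:e k:] 1 * r k)" by simp
    have "Fract [:z:] 1 \<in> ext_module D E (S_of D F)"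
      unfolding ext_module_def using eq eE rL by blast
    then show "z \<in> inter_K (ext_module D E (S_of D F))" by (simp add: inter_K_def)
  next
    fix z assume "z \<in> inter_K (ext_module D E (S_of D F))"
    then have "Fract [:z:] 1 \<in> ext_module D E (S_of D F)" by (simp add: inter_K_def)
    then obtain h t where ht: "h \<in> polys_over E" "t \<in> S_of D F" "Fract [:z:] 1 = Fract h t"
      using ext_repr[OF D MS E] by blast
    have t0: "t \<noteq> 0" using ht zS by auto
    have "[:z:] * t = h" using ht(3) t0 by (simp add: eq_fract)
    then have hc: "coeff h k = z * coeff t k" for k by auto
    have tD: "t \<in> polys_over D" and ct: "cont D t \<in> F" using S_char[OF D F] ht(2) by auto
    define A where "A = {d \<in> D. d * z \<in> E}"
    have AI: "ideal_of D A" unfolding A_def by (rule colon_ideal[OF D E])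
    have "t \<in> polys_over A"
      using tD ht(1) hc unfolding polys_over_def A_def by (auto simp: mult.commute)
    then have "cont D t \<subseteq> A" using cont_props(3)[OF D tD AI] by blast
    then have "z \<in> colon E (cont D t)" unfolding colon_def A_def by (auto simp: mult.commute)
    then show "z \<in> E_loc F E" unfolding E_loc_def using ct by blast
  qed
qed

theorem corollary2p2:
  fixes D :: "'k::field set"
  assumes "subring_of D" and "quotient_field_of D"
  shows "bij_betw (S_of D) {F. loc_sys_finite_type D F}
           {S. mult_subset D S \<and> ext_saturated D S} \<and>
         (\<forall>F E. loc_sys_finite_type D F \<and> Fbar D E \<longrightarrow>
           E_loc F E = inter_K (ext_module D E (S_of D F)))"
proof (intro conjI allI impI)
  note D = assms(1)
  show "bij_betw (S_of D) {F. loc_sys_finite_type D F} {S. mult_subset D S \<and> ext_saturated D S}"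
    unfolding bij_betw_def
  proof (intro conjI)
    show "inj_on (S_of D) {F. loc_sys_finite_type D F}"
    proof (rule inj_onI)
      fix F1 F2 assume F1: "F1 \<in> {F. loc_sys_finite_type D F}" and F2: "F2 \<in> {F. loc_sys_finite_type D F}"
        and eq: "S_of D F1 = S_of D F2"
      have "F1 = {I. ideal_of D I \<and> (\<exists>s\<in>S_of D F1. cont D s \<subseteq> I)}" using recover[OF D] F1 by blast
      also have "\<dots> = {I. ideal_of D I \<and> (\<exists>s\<in>S_of D F2. cont D s \<subseteq> I)}" using eq by simp
      also have "\<dots> = F2" using recover[OF D] F2 by blast
      finally show "F1 = F2" .
    qed
    show "S_of D ` {F. loc_sys_finite_type D F} = {S. mult_subset D S \<and> ext_saturated D S}"
    proof
      show "S_of D ` {F. loc_sys_finite_type D F} \<subseteq> {S. mult_subset D S \<and> ext_saturated D S}"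
        using S_in_target[OF D] by blast
    next
      show "{S. mult_subset D S \<and> ext_saturated D S} \<subseteq> S_of D ` {F. loc_sys_finite_type D F}"
      proof
        fix S assume "S \<in> {S. mult_subset D S \<and> ext_saturated D S}"
        then have "mult_subset D S" "ext_saturated D S" by auto
        from surj_part[OF D this] show "S \<in> S_of D ` {F. loc_sys_finite_type D F}"
          by (metis (no_types, lifting) image_eqI mem_Collect_eq)
      qed
    qed
  qed
next
  fix F E assume "loc_sys_finite_type D F \<and> Fbar D E"
  then show "E_loc F E = inter_K (ext_module D E (S_of D F))" using E_part[OF assms(1)] by blast
qed

end
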